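(* Let $K\subseteq\mathbb{R}^{n}$ be compact and let $T\subseteq\mathbb{R}^{n}$ be compact with non-empty interior. Then \[ M^{*}(K,T)\le N^{*}(K,-T)\quad\text{and}\quad\overline{M}_{\omega}(K,T)\le\overline{N}_{\omega}(K,-T). \] In particular, $M_{\omega}(K,T)\le N_{\omega}(K,-T)$.
   Context: $\mathbbm{1}_A$ is the indicator of $A$. $\mathcal{D}_{+}^{n}$ is the set of non-negative finite discrete measures on $\mathbb{R}^n$ (finite sums $\sum_i\omega_i\delta_{x_i}$, $\omega_i\ge0$) and $\mathcal{B}_{+}^{n}$ the non-negative regular Borel measures on $\mathbb{R}^n$; $(\nu*\mathbbm{1}_T)(x)=\int\mathbbm{1}_T(x-y)\,d\nu(y)$. Definitions: $N_\omega(K,T)=\inf\{\nu(\mathbb{R}^n):\nu\in\mathcal{D}_+^n,\ \nu*\mathbbm{1}_T\ge\mathbbm{1}_K\}$; $\overline{N}_\omega(K,T)=\inf\{\nu(\mathbb{R}^n):\nu\in\mathcal{D}_+^n,\ \mathrm{supp}(\nu)\subseteq K,\ \nu*\mathbbm{1}_T\ge\mathbbm{1}_K\}$; $N^{*}(K,T)=\inf\{\mu(\mathbb{R}^n):\mu\in\mathcal{B}_+^n,\ \mu*\mathbbm{1}_T\ge\mathbbm{1}_K\}$; $M_\omega(K,T)=\sup\{\nu(K):\nu\in\mathcal{D}_+^n,\ \nu*\mathbbm{1}_T\le1\text{ on }\mathbb{R}^n\}$; $\overline{M}_\omega(K,T)=\sup\{\nu(K):\nu\in\mathcal{D}_+^n,\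 (\nu*\mathbbm{1}_T)(x)\le1\ \forall x\in K\}$; $M^{*}(K,T)=\sup\{\mu(K):\mu\in\mathcal{B}_+^n,\ \mu*\mathbbm{1}_T\le1\text{ on }\mathbb{R}^n\}$. *)

theory Defs
  imports "HOL-Analysis.Analysis"
begin

text \<open>Non-negative finite discrete measures on the Euclidean space, represented by a
  weight function with finite support: nu = sum over x with w x \<noteq> 0 of w x * delta_x.\<close>

definition disc_meas :: "('a \<Rightarrow> real) \<Rightarrow> bool" where
  "disc_meas w \<longleftrightarrow> (\<forall>x. 0 \<le> w x) \<and> finite {x. w x \<noteq> 0}"

definition dsupp :: "('a \<Rightarrow> real) \<Rightarrow> 'a set" where
  "dsupp w = {x. w x \<noteq> 0}"

definition dmass :: "('a \<Rightarrow> real) \<Rightarrow> 'a set \<Rightarrow> real" where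
  "dmass w A = (\<Sum>x\<in>dsupp w \<inter> A. w x)"

definition dconv :: "('a::ab_group_add \<Rightarrow> real) \<Rightarrow> 'a set \<Rightarrow> 'a \<Rightarrow> real" where
  "dconv w T x = (\<Sum>y\<in>dsupp w. w y * indicator T (x - y))"

definition mconv :: "'a::ab_group_add measure \<Rightarrow> 'a set \<Rightarrow> 'a \<Rightarrow> ennreal" where
  "mconv M T x = (\<integral>\<^sup>+ y. indicator T (x - y) \<partial>M)"

definition regular_borel :: "'a::topological_space measure \<Rightarrow> bool" where
  "regular_borel M \<longleftrightarrow> sets M = sets borel \<and>
     (\<forall>B\<in>sets borel.
        emeasure M B = (INF U\<in>{U. open U \<and> B \<subseteq> U}. emeasure M U) \<and>
        emeasure M B = (SUP C\<in>{C. compact C \<and> C \<subseteq> B}. emeasure M C))"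

definition N_omega :: "'a::ab_group_add set \<Rightarrow> 'a set \<Rightarrow> ennreal" where
  "N_omega K T = Inf {ennreal (dmass w UNIV) | w. disc_meas w \<and> (\<forall>x. dconv w T x \<ge> indicator K x)}"

definition N_omega_bar :: "'a::ab_group_add set \<Rightarrow> 'a set \<Rightarrow> ennreal" where
  "N_omega_bar K T = Inf {ennreal (dmass w UNIV) | w. disc_meas w \<and> dsupp w \<subseteq> K \<and>
      (\<forall>x. dconv w T x \<ge> indicator K x)}"

definition N_star :: "'a::{ab_group_add,topological_space} set \<Rightarrow> 'a set \<Rightarrow> ennreal" where
  "N_star K T = Inf {emeasure M UNIV | M. regular_borel M \<and> (\<forall>x. mconv M T x \<ge> indicator K x)}"

definition M_omega :: "'a::ab_group_add set \<Rightarrow> 'a set \<Rightarrow> ennreal" where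
  "M_omega K T = Sup {ennreal (dmass w K) | w. disc_meas w \<and> (\<forall>x. dconv w T x \<le> 1)}"

definition M_omega_bar :: "'a::ab_group_add set \<Rightarrow> 'a set \<Rightarrow> ennreal" where
  "M_omega_bar K T = Sup {ennreal (dmass w K) | w. disc_meas w \<and> (\<forall>x\<in>K. dconv w T x \<le> 1)}"

definition M_star :: "'a::{ab_group_add,topological_space} set \<Rightarrow> 'a set \<Rightarrow> ennreal" where
  "M_star K T = Sup {emeasure M K | M. regular_borel M \<and> (\<forall>x. mconv M T x \<le> 1)}"

end

theory Submission
  imports Defs
begin

lemma neg_ind: "indicator (uminus ` T) (x - y) = (indicator T (y - (x::'a::ab_group_add)) :: 'b::zero_neq_one)"
proof -
  have "(x - y \<in> uminus ` T) = (y - x \<in> T)"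
    by (auto simp: image_iff algebra_simps intro!: bexI[of _ "y - x"])
  then show ?thesis by (simp add: indicator_def)
qed

lemma disc_main:
  fixes mu nu :: "'a::ab_group_add \<Rightarrow> real"
  assumes dm: "disc_meas mu" and dn: "disc_meas nu"
    and c1: "\<forall>x\<in>A. dconv mu T x \<le> 1" and sA: "dsupp nu \<subseteq> A"
    and c2: "\<forall>x. dconv nu (uminus ` T) x \<ge> indicator K x"
  shows "dmass mu K \<le> dmass nu UNIV"
proof -
  let ?Sm = "dsupp mu" and ?Sn = "dsupp nu"
  have fm: "finite ?Sm" and fn: "finite ?Sn" using dm dn by (auto simp: disc_meas_def dsupp_def)
  have pm: "\<And>x. mu x \<ge> 0" and pn: "\<And>x. nu x \<ge> 0" using dm dn by (auto simp: disc_meas_def)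
  have "dmass mu K = (\<Sum>x\<in>?Sm \<inter> K. mu x)" by (simp add: dmass_def)
  also have "\<dots> \<le> (\<Sum>x\<in>?Sm \<inter> K. mu x * dconv nu (uminus ` T) x)"
  proof (rule sum_mono)
    fix x assume "x \<in> ?Sm \<inter> K"
    then have "dconv nu (uminus ` T) x \<ge> 1" using c2[rule_format, of x] by simp
    then show "mu x \<le> mu x * dconv nu (uminus ` T) x"
      using pm[of x] by (simp add: mult_le_cancel_left1)
  qed
  also have "\<dots> = (\<Sum>x\<in>?Sm \<inter> K. \<Sum>y\<in>?Sn. mu x * nu y * indicator T (y - x))"
    by (simp add: dconv_def sum_distrib_left neg_ind mult.assoc)
  also have "\<dots> \<le> (\<Sum>x\<in>?Sm. \<Sum>y\<in>?Sn. mu x * nu y * indicator T (y - x))"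
    by (rule sum_mono2) (use fm pm pn in \<open>auto intro!: sum_nonneg\<close>)
  also have "\<dots> = (\<Sum>y\<in>?Sn. nu y * dconv mu T y)"
    by (subst sum.swap) (simp add: dconv_def sum_distrib_left mult_ac)
  also have "\<dots> \<le> (\<Sum>y\<in>?Sn. nu y)"
  proof (rule sum_mono)
    fix y assume "y \<in> ?Sn"
    then have "dconv mu T y \<le> 1" using c1 sA by auto
    then show "nu y * dconv mu T y \<le> nu y" using pn[of y] by (simp add: mult_left_le)
  qed
  also have "\<dots> = dmass nu UNIV" by (simp add: dmass_def)
  finally show ?thesis .
qed

lemma closed_pre: "closed T \<Longrightarrow> closed {y. x - y \<in> (T::'a::euclidean_space set)}"
proof -
  assume "closed T"
  have "continuous_on UNIV (\<lambda>y. x - y)" by (intro continuous_intros)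
  then have "closed ((\<lambda>y. x - y) -` T)" using \<open>closed T\<close> by (rule closed_vimage[rotated])
  then show ?thesis by (simp add: vimage_def)
qed

lemma mconv_eq:
  fixes mu :: "'a::euclidean_space measure"
  assumes "sets mu = sets borel" "closed T"
  shows "mconv mu T x = emeasure mu {y. x - y \<in> T}"
proof -
  have S: "{y. x - y \<in> T} \<in> sets mu" using assms closed_pre[of T x] by auto
  have "mconv mu T x = (\<integral>\<^sup>+ y. indicator {y. x - y \<in> T} y \<partial>mu)"
    unfolding mconv_def by (rule nn_integral_cong) (simp add: indicator_def)
  also have "\<dots> = emeasure mu {y. x - y \<in> T}" using S by simp
  finally show ?thesis .
qed

lemma finite_on_compact:
  fixes mu :: "'a::euclidean_space measure"
  assumes sm: "sets mu = sets borel" and K: "compact K" and T: "compact T" and iT: "interior T \<noteq> {}"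
    and c1: "\<forall>x. mconv mu T x \<le> 1"
  shows "emeasure mu K < \<infinity>"
proof -
  obtain c where "c \<in> interior T" using iT by blast
  then obtain r where r: "r > 0" "ball c r \<subseteq> T" by (meson open_contains_ball open_interior interior_subset order_trans)
  have cl: "closed T" using T compact_imp_closed by blast
  define B where "B z = {y. (z + c) - y \<in> T}" for z
  have Bb: "ball z r \<subseteq> B z" for z
  proof
    fix v assume "v \<in> ball z r"
    then have "(z + c) - v \<in> ball c r" by (simp add: dist_norm norm_minus_commute algebra_simps)
    then show "v \<in> B z" using r by (auto simp: B_def)
  qed
  obtain F where F: "F \<subseteq> K" "finite F" "K \<subseteq> (\<Union>z\<in>F. ball z r)"
    using compactE_image[OF K, of K "\<lambda>z. ball z r"] r by (metis centre_in_ball UN_I open_ball subsetI)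
  have Bs: "B z \<in> sets mu" for z using sm closed_pre[OF cl] by (auto simp: B_def)
  have "K \<subseteq> (\<Union>z\<in>F. B z)" using F Bb by blast
  then have "emeasure mu K \<le> emeasure mu (\<Union>z\<in>F. B z)"
    by (intro emeasure_mono) (use F Bs in auto)
  also have "\<dots> \<le> (\<Sum>z\<in>F. emeasure mu (B z))"
    by (rule emeasure_subadditive_finite) (use F Bs in auto)
  also have "\<dots> \<le> (\<Sum>z\<in>F. 1)"
  proof (rule sum_mono)
    fix z
    have "emeasure mu (B z) = mconv mu T (z + c)" using mconv_eq[OF sm cl, of "z + c"] by (simp add: B_def)
    then show "emeasure mu (B z) \<le> 1" using c1 by metis
  qed
  also have "\<dots> < \<infinity>" by (simp add: of_nat_less_top)
  finally show ?thesis .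
qed

lemma meas_main:
  fixes mu M :: "'a::euclidean_space measure"
  assumes sm: "sets mu = sets borel" and sM: "sets M = sets borel"
    and K: "compact K" and T: "compact T" and iT: "interior T \<noteq> {}"
    and c1: "\<forall>x. mconv mu T x \<le> 1"
    and c2: "\<forall>x. mconv M (uminus ` T) x \<ge> indicator K x"
  shows "emeasure mu K \<le> emeasure M UNIV"
proof (cases "emeasure M UNIV = \<infinity>")
  case True then show ?thesis by simp
next
  case False
  have spm: "space mu = UNIV" using sets_eq_imp_space_eq[OF sm] by simp
  have spM: "space M = UNIV" using sets_eq_imp_space_eq[OF sM] by simp
  have cl: "closed T" using T compact_imp_closed by blast
  have Kb: "K \<in> sets borel" using K compact_imp_closed borel_closed by blast
  define muK where "muK = density mu (indicator K)"
  have imK: "indicator K \<in> borel_measurable mu"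
    using Kb by (subst measurable_cong_sets[OF sm refl]) simp
  have fin: "emeasure mu K < \<infinity>" using finite_on_compact[OF sm K T iT c1] .
  have "emeasure muK (space muK) = emeasure mu K"
    unfolding muK_def using imK Kb sm spm by (simp add: emeasure_density nn_integral_indicator)
  then have fK: "finite_measure muK" using fin by (intro finite_measureI) simp
  have fM: "finite_measure M" using False spM by (intro finite_measureI) simp
  interpret P: pair_sigma_finite muK M
    using fK fM unfolding pair_sigma_finite_def finite_measure_def by blast
  have smK: "sets muK = sets borel" using sm by (simp add: muK_def)
  define S where "S = {p::'a\<times>'a. snd p - fst p \<in> T}"
  have "closed S"
  proof -
    have "continuous_on UNIV (\<lambda>p::'a\<times>'a. snd p - fst p)" by (intro continuous_intros)
    then have "closed ((\<lambda>p::'a\<times>'a. snd p - fst p) -` T)" using cl by (rule closed_vimage[rotated])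
    then show ?thesis by (simp add: S_def vimage_def)
  qed
  then have "S \<in> sets (borel \<Otimes>\<^sub>M borel)" unfolding borel_prod by (rule borel_closed)
  then have fm: "(\<lambda>(x,y). indicator T (y - x) :: ennreal) \<in> borel_measurable (muK \<Otimes>\<^sub>M M)"
  proof -
    assume "S \<in> sets (borel \<Otimes>\<^sub>M borel)"
    then have "(indicator S :: 'a\<times>'a \<Rightarrow> ennreal) \<in> borel_measurable (borel \<Otimes>\<^sub>M borel)" by (rule borel_measurable_indicator)
    then have "(indicator S :: 'a\<times>'a \<Rightarrow> ennreal) \<in> borel_measurable (muK \<Otimes>\<^sub>M M)"
      by (subst measurable_cong_sets[OF sets_pair_measure_cong[OF smK sM] refl])
    moreover have "indicator S = (\<lambda>(x,y). indicator T (y - x) :: ennreal)"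
      by (auto simp: S_def indicator_def fun_eq_iff)
    ultimately show ?thesis by simp
  qed
  have mx: "(\<lambda>x. indicator T (y - x) :: ennreal) \<in> borel_measurable mu" for y
  proof -
    have "{x. y - x \<in> T} \<in> sets mu" using sm closed_pre[OF cl] by auto
    then have "(indicator {x. y - x \<in> T} :: 'a \<Rightarrow> ennreal) \<in> borel_measurable mu" by simp
    moreover have "indicator {x. y - x \<in> T} = (\<lambda>x. indicator T (y - x) :: ennreal)"
      by (auto simp: indicator_def)
    ultimately show ?thesis by simp
  qed
  have mc: "(\<lambda>x. mconv M (uminus ` T) x) \<in> borel_measurable mu"
  proof -
    have "(\<lambda>x. \<integral>\<^sup>+ y. indicator T (y - x) \<partial>M) \<in> borel_measurable muK"
      using P.M2.borel_measurable_nn_integral_fst[OF fm] by simp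
    then have "(\<lambda>x. \<integral>\<^sup>+ y. indicator T (y - x) \<partial>M) \<in> borel_measurable mu"
      by (subst (asm) measurable_cong_sets[OF smK refl], subst measurable_cong_sets[OF sm refl])
    then show ?thesis by (simp add: mconv_def neg_ind)
  qed
  have "emeasure mu K = (\<integral>\<^sup>+ x. indicator K x \<partial>mu)" using Kb sm by simp
  also have "\<dots> \<le> (\<integral>\<^sup>+ x. indicator K x * mconv M (uminus ` T) x \<partial>mu)"
  proof (rule nn_integral_mono)
    fix x show "indicator K x \<le> indicator K x * mconv M (uminus ` T) x"
      using c2[rule_format, of x] by (cases "x \<in> K") auto
  qed
  also have "\<dots> = (\<integral>\<^sup>+ x. mconv M (uminus ` T) x \<partial>muK)"
    unfolding muK_def by (rule nn_integral_density[symmetric, OF imK mc])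
  also have "\<dots> = (\<integral>\<^sup>+ x. \<integral>\<^sup>+ y. indicator T (y - x) \<partial>M \<partial>muK)"
    by (simp add: mconv_def neg_ind)
  also have "\<dots> = (\<integral>\<^sup>+ y. \<integral>\<^sup>+ x. indicator T (y - x) \<partial>muK \<partial>M)"
    using P.Fubini'[of "\<lambda>x y. indicator T (y - x)"] fm by simp
  also have "\<dots> \<le> (\<integral>\<^sup>+ y. \<integral>\<^sup>+ x. indicator T (y - x) \<partial>mu \<partial>M)"
  proof (rule nn_integral_mono)
    fix y
    have "(\<integral>\<^sup>+ x. indicator T (y - x) \<partial>muK) = (\<integral>\<^sup>+ x. indicator K x * indicator T (y - x) \<partial>mu)"
      unfolding muK_def by (rule nn_integral_density[OF imK mx])
    also have "\<dots> \<le> (\<integral>\<^sup>+ x. indicator T (y - x) \<partial>mu)"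
      by (rule nn_integral_mono) (auto simp: indicator_def)
    finally show "(\<integral>\<^sup>+ x. indicator T (y - x) \<partial>muK) \<le> (\<integral>\<^sup>+ x. indicator T (y - x) \<partial>mu)" .
  qed
  also have "\<dots> = (\<integral>\<^sup>+ y. mconv mu T y \<partial>M)" by (simp add: mconv_def)
  also have "\<dots> \<le> (\<integral>\<^sup>+ y. 1 \<partial>M)"
    by (rule nn_integral_mono) (use c1 in auto)
  also have "\<dots> = emeasure M UNIV" using spM by simp
  finally show ?thesis .
qed

theorem proposition2p1:
  fixes K T :: "(real ^ 'n) set"
  assumes "compact K" and "compact T" and "interior T \<noteq> {}"
  shows "M_star K T \<le> N_star K (uminus ` T) \<and>
         M_omega_bar K T \<le> N_omega_bar K (uminus ` T) \<and>
         M_omega K T \<le> N_omega K (uminus ` T)"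
proof (intro conjI)
  show "M_omega_bar K T \<le> N_omega_bar K (uminus ` T)"
    unfolding M_omega_bar_def N_omega_bar_def
    by (rule Sup_least, rule Inf_greatest, clarify, rule ennreal_leI, rule disc_main[where A=K]) auto
  show "M_omega K T \<le> N_omega K (uminus ` T)"
    unfolding M_omega_def N_omega_def
    by (rule Sup_least, rule Inf_greatest, clarify, rule ennreal_leI, rule disc_main[where A=UNIV]) auto
  show "M_star K T \<le> N_star K (uminus ` T)"
    unfolding M_star_def N_star_def
  proof (rule Sup_least, rule Inf_greatest)
    fix a b assume "a \<in> {emeasure M K |M. regular_borel M \<and> (\<forall>x. mconv M T x \<le> 1)}"
      and "b \<in> {emeasure M UNIV |M. regular_borel M \<and> (\<forall>x. indicator K x \<le> mconv M (uminus ` T) x)}"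
    then obtain mu M where a: "a = emeasure mu K" "regular_borel mu" "\<forall>x. mconv mu T x \<le> 1"
      and b: "b = emeasure M UNIV" "regular_borel M" "\<forall>x. indicator K x \<le> mconv M (uminus ` T) x"
      by blast
    have s1: "sets mu = sets borel" using a(2) unfolding regular_borel_def by (rule conjunct1)
    have s2: "sets M = sets borel" using b(2) unfolding regular_borel_def by (rule conjunct1)
    show "a \<le> b" unfolding a(1) b(1) by (rule meas_main[OF s1 s2 assms a(3) b(3)])
  qed
qed

end
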